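(* Let $Q$ be a topological $k$-quandle and let $L^1_C$ and $L^2_{C'}$ be $k$-colored links. Then $\hat{J}_Q(L^1_C\amalg L^2_{C'})$ is homeomorphic to $\hat{J}_Q(L^1_C)\times\hat{J}_Q(L^2_{C'})$, where $L^1_C\amalg L^2_{C'}$ denotes the disjoint (split) sum of the two colored links.
   Context: A quandle is a set with a binary operation $\triangleright$ such that $x\triangleright x=x$, each right translation $x\mapsto x\triangleright y$ is a bijection (inverse written $x\mapsto x\triangleright^{-1}y$), and $(x\triangleright y)\triangleright z=(x\triangleright z)\triangleright(y\triangleright z)$. A $k$-quandle is a set with operations $\triangleright_1,\dots,\triangleright_k$, each making it a quandle, with $(x\triangleright_i y)\triangleright_j z=(x\triangleright_j z)\triangleright_i(y\triangleright_j z)$ for all $i,j,x,y,z$. A topological $k$-quandle is a $k$-quandle with a topology making all $\triangleright_i,\triangleright_i^{-1}:Q\times Q\to Q$ continuous. A $k$-colored link is an oriented link whose components are each labeled by one of the colors $1,\dots,k$, considered up to orientation- and color-preserving ambient isotopy. A $k$-colored $n$-braid ${}^v_w\sigma$ is an $n$-strand braid (oriented top to bottom) with colored strands, $v$ and $w$ being the color tuples at the top and bottom ends read left to right; the closure of ${}^v_v\sigma$ joins each top end to the bottom end in the same position and is a $k$-colored link, and every $k$-colored link arises this way. For $v$ and $w$ differing by a swap of entries $i,i+1$, the elementary colored braid ${}^v_w\sigma_i$ induces the homeomorphism $Q^n\to Q^n$, $x\mapsto x'$ with $x'_j=x_j$ for $j\ne i,i+1$, $x'_i=x_{i+1}$,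 $x'_{i+1}=x_i\triangleright_{v_{i+1}}x_{i+1}$; ${}^w_v\sigma_i^{-1}$ induces its inverse; a product ${}^{v^1}_{v^2}\sigma_{i_1}^{\pm}\cdots{}^{v^m}_{v^{m+1}}\sigma_{i_m}^{\pm}$ induces the composite ${}^{v^m}_{v^{m+1}}\sigma_{i_m}^{\pm}\circ\cdots\circ{}^{v^1}_{v^2}\sigma_{i_1}^{\pm}$. For $L_C=\overline{{}^v_v\sigma}$, $\hat{J}_Q(L_C)\subseteq Q^n$ is the space of fixed points of the map ${}^v_v\sigma:Q^n\to Q^n$ (with subspace topology); up to homeomorphism it depends only on the colored link $L_C$. *)

theory Defs
  imports "HOL-Analysis.Analysis"
begin

definition qinv :: "'a topology \<Rightarrow> (nat \<Rightarrow> 'a \<Rightarrow> 'a \<Rightarrow> 'a) \<Rightarrow> nat \<Rightarrow> 'a \<Rightarrow> 'a \<Rightarrow> 'a" where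
  "qinv X op i x y = inv_into (topspace X) (\<lambda>z. op i z y) x"

definition k_quandle :: "'a set \<Rightarrow> (nat \<Rightarrow> 'a \<Rightarrow> 'a \<Rightarrow> 'a) \<Rightarrow> nat \<Rightarrow> bool" where
  "k_quandle Q op k \<longleftrightarrow>
     (\<forall>i\<in>{1..k}. \<forall>x\<in>Q. \<forall>y\<in>Q. op i x y \<in> Q) \<and>
     (\<forall>i\<in>{1..k}. \<forall>x\<in>Q. op i x x = x) \<and>
     (\<forall>i\<in>{1..k}. \<forall>y\<in>Q. bij_betw (\<lambda>x. op i x y) Q Q) \<and>
     (\<forall>i\<in>{1..k}. \<forall>j\<in>{1..k}. \<forall>x\<in>Q. \<forall>y\<in>Q. \<forall>z\<in>Q.
        op j (op i x y) z = op i (op j x z) (op j y z))"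

definition topological_k_quandle :: "'a topology \<Rightarrow> (nat \<Rightarrow> 'a \<Rightarrow> 'a \<Rightarrow> 'a) \<Rightarrow> nat \<Rightarrow> bool" where
  "topological_k_quandle X op k \<longleftrightarrow>
     k_quandle (topspace X) op k \<and>
     (\<forall>i\<in>{1..k}. continuous_map (prod_topology X X) X (\<lambda>(x, y). op i x y)) \<and>
     (\<forall>i\<in>{1..k}. continuous_map (prod_topology X X) X (\<lambda>(x, y). qinv X op i x y))"

text \<open>Colored braid words. A generator (i, True) is sigma_{i+1}, (i, False) is its inverse
  (0-based strand positions i, i+1). Colors are lists, read left to right.\<close>

type_synonym gen = "nat \<times> bool"

definition swap_colors :: "nat list \<Rightarrow> nat \<Rightarrow> nat list" where
  "swap_colors v i = v[i := v ! Suc i, Suc i := v ! i]"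

fun colors_after :: "nat list \<Rightarrow> gen list \<Rightarrow> nat list" where
  "colors_after v [] = v"
| "colors_after v ((i, p) # ws) = colors_after (swap_colors v i) ws"

text \<open>Homeomorphism of Q^n induced by an elementary colored braid with top colors v.\<close>
definition gen_map :: "'a topology \<Rightarrow> (nat \<Rightarrow> 'a \<Rightarrow> 'a \<Rightarrow> 'a) \<Rightarrow> nat list \<Rightarrow> gen
    \<Rightarrow> (nat \<Rightarrow> 'a) \<Rightarrow> (nat \<Rightarrow> 'a)" where
  "gen_map X op v g x = (case g of (i, p) \<Rightarrow>
     (if p then x(i := x (Suc i), Suc i := op (v ! Suc i) (x i) (x (Suc i)))
      else x(i := qinv X op (v ! i) (x (Suc i)) (x i), Suc i := x i)))"

text \<open>Map induced by a braid word with top colors v: first generator applied first.\<close>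
fun braid_map :: "'a topology \<Rightarrow> (nat \<Rightarrow> 'a \<Rightarrow> 'a \<Rightarrow> 'a) \<Rightarrow> nat list \<Rightarrow> gen list
    \<Rightarrow> (nat \<Rightarrow> 'a) \<Rightarrow> (nat \<Rightarrow> 'a)" where
  "braid_map X op v [] x = x"
| "braid_map X op v (g # ws) x = braid_map X op (swap_colors v (fst g)) ws (gen_map X op v g x)"

text \<open>A k-colored braid with top colors v whose closure is defined (bottom colors = v).\<close>
definition closable_colored_braid :: "nat \<Rightarrow> nat list \<Rightarrow> gen list \<Rightarrow> bool" where
  "closable_colored_braid k v ws \<longleftrightarrow>
     v \<noteq> [] \<and> set v \<subseteq> {1..k} \<and> (\<forall>g\<in>set ws. Suc (fst g) < length v) \<and>
     colors_after v ws = v"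

text \<open>Q^n as the product topology on extensional functions {..<n} -> Q; J-hat is the
  subspace of fixed points of the induced map.\<close>
definition J_hat :: "'a topology \<Rightarrow> (nat \<Rightarrow> 'a \<Rightarrow> 'a \<Rightarrow> 'a) \<Rightarrow> nat list \<Rightarrow> gen list
    \<Rightarrow> (nat \<Rightarrow> 'a) topology" where
  "J_hat X op v ws = subtopology (product_topology (\<lambda>_. X) {..<length v})
     {x \<in> topspace (product_topology (\<lambda>_. X) {..<length v}). braid_map X op v ws x = x}"

text \<open>Split sum of closed braids: juxtapose the second braid to the right of the first.\<close>
definition braid_juxt :: "nat \<Rightarrow> gen list \<Rightarrow> gen list \<Rightarrow> gen list" where
  "braid_juxt n ws1 ws2 = ws1 @ map (\<lambda>(i, p). (i + n, p)) ws2"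

end

theory Submission
  imports Defs
begin

lemma swap_colors_len[simp]: "length (swap_colors v i) = length v"
  by (simp add: swap_colors_def)

lemma swap_colors_app1: "Suc i < length v1 \<Longrightarrow> swap_colors (v1 @ v2) i = swap_colors v1 i @ v2"
  by (simp add: swap_colors_def list_update_append nth_append)

lemma swap_colors_app2: "Suc i < length v2 \<Longrightarrow> swap_colors (v1 @ v2) (i + length v1) = v1 @ swap_colors v2 i"
  by (simp add: swap_colors_def list_update_append nth_append)

lemma colors_after_app1: "\<forall>g\<in>set ws. Suc (fst g) < length v1 \<Longrightarrow>
   colors_after (v1 @ v2) ws = colors_after v1 ws @ v2"
  by (induction ws arbitrary: v1) (auto simp: swap_colors_app1)

lemma braid_map_append: "braid_map X op v (ws @ ws') x = braid_map X op (colors_after v ws) ws' (braid_map X op v ws x)"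
  by (induction ws arbitrary: v x) auto

lemma braid_map_high: "\<forall>g\<in>set ws. Suc (fst g) < length v \<Longrightarrow> length v \<le> j \<Longrightarrow> braid_map X op v ws x j = x j"
proof (induction ws arbitrary: v x)
  case Nil then show ?case by simp
next
  case (Cons g ws)
  obtain i p where g: "g = (i,p)" by force
  have "braid_map X op v (g # ws) x j = gen_map X op v g x j"
    using Cons by simp
  also have "\<dots> = x j" using Cons g by (auto simp: gen_map_def)
  finally show ?case .
qed

lemma braid_map_app1: "\<forall>g\<in>set ws. Suc (fst g) < length v1 \<Longrightarrow>
   braid_map X op (v1 @ v2) ws x = braid_map X op v1 ws x"
proof (induction ws arbitrary: v1 x)
  case Nil then show ?case by simp
next
  case (Cons g ws)
  obtain i p where g: "g = (i,p)" by force
  have "gen_map X op (v1 @ v2) g x = gen_map X op v1 g x"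
    using Cons g by (auto simp: gen_map_def nth_append)
  then show ?case using Cons g by (simp add: swap_colors_app1)
qed

lemma braid_map_local: "\<forall>j<length v. x j = y j \<Longrightarrow> j < length v \<Longrightarrow> \<forall>g\<in>set ws. Suc (fst g) < length v \<Longrightarrow>
   braid_map X op v ws x j = braid_map X op v ws y j"
proof (induction ws arbitrary: v x y)
  case Nil then show ?case by simp
next
  case (Cons g ws)
  obtain i p where g: "g = (i,p)" by force
  have "\<forall>j<length (swap_colors v (fst g)). gen_map X op v g x j = gen_map X op v g y j"
    using Cons.prems g by (auto simp: gen_map_def)
  then show ?case using Cons by simp
qed

lemma braid_map_shift: "\<forall>g\<in>set ws. Suc (fst g) < length v2 \<Longrightarrow>
   braid_map X op (v1 @ v2) (map (\<lambda>(i, p). (i + length v1, p)) ws) x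
   = (\<lambda>j. if j < length v1 then x j else braid_map X op v2 ws (\<lambda>j. x (j + length v1)) (j - length v1))"
proof (induction ws arbitrary: v2 x)
  case Nil then show ?case by (auto simp: fun_eq_iff)
next
  case (Cons g ws)
  obtain i p where g: "g = (i,p)" by force
  let ?n = "length v1"
  have e: "gen_map X op (v1 @ v2) (i + ?n, p) x = (\<lambda>j. if j < ?n then x j else gen_map X op v2 (i,p) (\<lambda>j. x (j + ?n)) (j - ?n))"
    using Cons.prems g by (auto simp: gen_map_def nth_append fun_eq_iff)
  have e2: "(\<lambda>j. (if j < ?n then x j else gen_map X op v2 (i,p) (\<lambda>j. x (j + ?n)) (j - ?n)) ) o (\<lambda>j. j + ?n)
     = gen_map X op v2 (i,p) (\<lambda>j. x (j + ?n))" by (auto simp: fun_eq_iff)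
  show ?case using Cons.prems g
    apply (simp add: swap_colors_app2 e Cons.IH)
    using e2 by (auto simp: fun_eq_iff comp_def)
qed

lemma fix_restrict:
  assumes b: "\<forall>g\<in>set ws. Suc (fst g) < length v"
  shows "braid_map X op v ws (restrict x {..<length v}) = restrict x {..<length v}
     \<longleftrightarrow> (\<forall>j<length v. braid_map X op v ws x j = x j)"
proof -
  have "braid_map X op v ws (restrict x {..<length v}) j = braid_map X op v ws x j" if "j < length v" for j
    using braid_map_local[OF _ that b, of "restrict x {..<length v}" x] by simp
  moreover have "braid_map X op v ws (restrict x {..<length v}) j = restrict x {..<length v} j" if "\<not> j < length v" for j
    using braid_map_high[OF b, of j X op "restrict x {..<length v}"] that by simp
  ultimately show ?thesis by (auto simp: fun_eq_iff)
qed

lemma fix_char: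
  assumes b1: "\<forall>g\<in>set ws1. Suc (fst g) < length v1" and c1: "colors_after v1 ws1 = v1"
    and b2: "\<forall>g\<in>set ws2. Suc (fst g) < length v2"
  shows "braid_map X op (v1 @ v2) (braid_juxt (length v1) ws1 ws2) x = x \<longleftrightarrow>
    (braid_map X op v1 ws1 (restrict x {..<length v1}) = restrict x {..<length v1} \<and>
     braid_map X op v2 ws2 (restrict (\<lambda>j. x (j + length v1)) {..<length v2}) = restrict (\<lambda>j. x (j + length v1)) {..<length v2})"
proof -
  let ?n = "length v1"
  define y where "y = braid_map X op v1 ws1 x"
  have yh: "(\<lambda>j. y (j + ?n)) = (\<lambda>j. x (j + ?n))"
    unfolding y_def fun_eq_iff by (intro allI braid_map_high[OF b1]) simp
  have L: "braid_map X op (v1 @ v2) (braid_juxt (length v1) ws1 ws2) x =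
     (\<lambda>j. if j < ?n then y j else braid_map X op v2 ws2 (\<lambda>j. x (j + ?n)) (j - ?n))"
    unfolding braid_juxt_def braid_map_append colors_after_app1[OF b1] c1 braid_map_app1[OF b1]
      braid_map_shift[OF b2] y_def[symmetric] yh ..
  have A: "(\<forall>j. \<not> j < ?n \<longrightarrow> braid_map X op v2 ws2 (\<lambda>j. x (j + ?n)) (j - ?n) = x j)
     \<longleftrightarrow> (\<forall>j. braid_map X op v2 ws2 (\<lambda>j. x (j + ?n)) j = x (j + ?n))"
    by (metis add.commute le_add_diff_inverse add_diff_cancel_right' le_add2 not_less)
  have B: "(\<forall>j. braid_map X op v2 ws2 (\<lambda>j. x (j + ?n)) j = x (j + ?n))
     \<longleftrightarrow> (\<forall>j<length v2. braid_map X op v2 ws2 (\<lambda>j. x (j + ?n)) j = x (j + ?n))"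
    using braid_map_high[OF b2] by (metis not_less)
  have "braid_map X op (v1 @ v2) (braid_juxt (length v1) ws1 ws2) x = x \<longleftrightarrow>
     (\<forall>j<?n. y j = x j) \<and> (\<forall>j. \<not> j < ?n \<longrightarrow> braid_map X op v2 ws2 (\<lambda>j. x (j + ?n)) (j - ?n) = x j)"
    unfolding L fun_eq_iff by auto
  also have "\<dots> \<longleftrightarrow> (\<forall>j<?n. y j = x j) \<and> (\<forall>j<length v2. braid_map X op v2 ws2 (\<lambda>j. x (j + ?n)) j = x (j + ?n))"
    using A B by simp
  finally show ?thesis
    unfolding fix_restrict[OF b1] fix_restrict[OF b2, of _ _ "\<lambda>j. x (j + ?n)"] y_def .
qed

theorem mainTheorem7:
  fixes X :: "'a topology" and op :: "nat \<Rightarrow> 'a \<Rightarrow> 'a \<Rightarrow> 'a" and k :: nat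
    and v1 v2 :: "nat list" and ws1 ws2 :: "gen list"
  assumes "topological_k_quandle X op k"
    and "closable_colored_braid k v1 ws1"
    and "closable_colored_braid k v2 ws2"
  shows "J_hat X op (v1 @ v2) (braid_juxt (length v1) ws1 ws2)
           homeomorphic_space prod_topology (J_hat X op v1 ws1) (J_hat X op v2 ws2)"
proof -
  let ?n = "length v1" and ?m = "length v2"
  have b1: "\<forall>g\<in>set ws1. Suc (fst g) < length v1" and c1: "colors_after v1 ws1 = v1"
    and b2: "\<forall>g\<in>set ws2. Suc (fst g) < length v2"
    using assms(2,3) by (auto simp: closable_colored_braid_def)
  define P where "P = (\<lambda>l. product_topology (\<lambda>_::nat. X) {..<l})"
  define f where "f = (\<lambda>x::nat\<Rightarrow>'a. (restrict x {..<?n}, restrict (\<lambda>j. x (j + ?n)) {..<?m}))"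
  define g where "g = (\<lambda>(a::nat\<Rightarrow>'a, b::nat\<Rightarrow>'a). restrict (\<lambda>j. if j < ?n then a j else b (j - ?n)) {..<?n + ?m})"
  define F where "F = {x \<in> topspace (P (?n + ?m)). braid_map X op (v1 @ v2) (braid_juxt ?n ws1 ws2) x = x}"
  define F1 where "F1 = {x \<in> topspace (P ?n). braid_map X op v1 ws1 x = x}"
  define F2 where "F2 = {x \<in> topspace (P ?m). braid_map X op v2 ws2 x = x}"
  have J: "J_hat X op (v1 @ v2) (braid_juxt (length v1) ws1 ws2) = subtopology (P (?n + ?m)) F"
    "J_hat X op v1 ws1 = subtopology (P ?n) F1" "J_hat X op v2 ws2 = subtopology (P ?m) F2"
    unfolding J_hat_def P_def F_def F1_def F2_def by simp_all
  have fc: "f x \<in> F1 \<times> F2 \<longleftrightarrow> x \<in> F" if "x \<in> topspace (P (?n + ?m))" for x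
  proof -
    have "fst (f x) \<in> topspace (P ?n)" "snd (f x) \<in> topspace (P ?m)"
      using that unfolding P_def f_def by (auto simp: PiE_iff)
    then show ?thesis using that unfolding F_def F1_def F2_def
      by (simp add: fix_char[OF b1 c1 b2] f_def)
  qed
  have gf: "g (f x) = x" if "x \<in> topspace (P (?n + ?m))" for x
    using that unfolding P_def f_def g_def by (auto simp: fun_eq_iff PiE_iff extensional_def)
  have gt: "g y \<in> topspace (P (?n + ?m))" if "y \<in> topspace (prod_topology (P ?n) (P ?m))" for y
    using that unfolding P_def g_def by (auto simp: PiE_iff split: prod.splits)
  have fg: "f (g y) = y" if "y \<in> topspace (prod_topology (P ?n) (P ?m))" for y
    using that unfolding P_def f_def g_def
    by (auto simp: fun_eq_iff PiE_iff extensional_def split: prod.splits)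
  have cf: "continuous_map (P (?n + ?m)) (prod_topology (P ?n) (P ?m)) f"
    unfolding f_def P_def continuous_map_pairwise o_def
    by (auto simp: continuous_map_componentwise intro!: continuous_map_product_projection)
  have cg: "continuous_map (prod_topology (P ?n) (P ?m)) (P (?n + ?m)) g"
    unfolding P_def continuous_map_componentwise
  proof (intro conjI ballI)
    show "g ` topspace (prod_topology (product_topology (\<lambda>_. X) {..<?n}) (product_topology (\<lambda>_. X) {..<?m})) \<subseteq> extensional {..<?n + ?m}"
      unfolding g_def by (auto split: prod.splits)
    fix j assume j: "j \<in> {..<?n + ?m}"
    show "continuous_map (prod_topology (product_topology (\<lambda>_. X) {..<?n}) (product_topology (\<lambda>_. X) {..<?m})) X (\<lambda>x. g x j)"
    proof (cases "j < ?n")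
      case True
      then have "(\<lambda>x. g x j) = (\<lambda>x. fst x j)" using j unfolding g_def by (auto simp: fun_eq_iff)
      then show ?thesis using True
        by (metis continuous_map_compose[OF continuous_map_fst continuous_map_product_projection, unfolded o_def] lessThan_iff)
    next
      case False
      then have "(\<lambda>x. g x j) = (\<lambda>x. snd x (j - ?n))" using j unfolding g_def by (auto simp: fun_eq_iff)
      moreover have "j - ?n \<in> {..<?m}" using j False by auto
      ultimately show ?thesis
        by (metis continuous_map_compose[OF continuous_map_snd continuous_map_product_projection, unfolded o_def])
    qed
  qed
  have "homeomorphic_maps (subtopology (P (?n + ?m)) F) (subtopology (prod_topology (P ?n) (P ?m)) (F1 \<times> F2)) f g"
    unfolding homeomorphic_maps_def
  proof (intro conjI ballI)
    show "continuous_map (subtopology (P (?n + ?m)) F) (subtopology (prod_topology (P ?n) (P ?m)) (F1 \<times> F2)) f"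
      using fc cf by (auto simp: continuous_map_in_subtopology continuous_map_from_subtopology)
    show "continuous_map (subtopology (prod_topology (P ?n) (P ?m)) (F1 \<times> F2)) (subtopology (P (?n + ?m)) F) g"
    proof -
      have "g ` topspace (subtopology (prod_topology (P ?n) (P ?m)) (F1 \<times> F2)) \<subseteq> F"
      proof
        fix z assume "z \<in> g ` topspace (subtopology (prod_topology (P ?n) (P ?m)) (F1 \<times> F2))"
        then obtain y where y: "y \<in> topspace (prod_topology (P ?n) (P ?m))" "y \<in> F1 \<times> F2" and z: "z = g y" by auto
        show "z \<in> F" using fc[OF gt[OF y(1)]] fg[OF y(1)] y z by simp
      qed
      then show ?thesis
        by (simp add: continuous_map_in_subtopology continuous_map_from_subtopology cg image_subset_iff_funcset)
    qed
    show "g (f x) = x" if "x \<in> topspace (subtopology (P (?n + ?m)) F)" for x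
      using gf that by auto
    show "f (g y) = y" if "y \<in> topspace (subtopology (prod_topology (P ?n) (P ?m)) (F1 \<times> F2))" for y
      using fg that by auto
  qed
  then have H: "subtopology (P (?n + ?m)) F homeomorphic_space prod_topology (subtopology (P ?n) F1) (subtopology (P ?m) F2)"
    unfolding subtopology_Times[symmetric] homeomorphic_space_def by blast
  show ?thesis unfolding J by (rule H)
qed

end
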